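(* Let $\mathcal M$ be a smooth manifold on which the group $\mathbb{R}^p$ acts (smoothly). Assume that some full lattice $\Gamma$ of $\mathbb{R}^p$ acts freely and properly on $\mathcal M$ (via the restricted action). Then $\mathbb{R}^p$ acts freely on $\mathcal M$.
   Context: A full lattice of $\mathbb{R}^p$ is a discrete subgroup $\Gamma$ with $\mathbb{R}^p/\Gamma$ compact. *)

theory Defs
  imports "HOL-Analysis.Analysis"
begin

text \<open>C-infinity maps between open subsets of finite-dimensional real vector spaces:
  f lies in a family of continuous, (Frechet) differentiable maps which is closed under
  taking directional derivatives.\<close>
definition smooth_on :: "'a::euclidean_space set \<Rightarrow> ('a \<Rightarrow> 'b::euclidean_space) \<Rightarrow> bool" where
  "smooth_on S f \<longleftrightarrow> open S \<and>
     (\<exists>F. f \<in> F \<and> (\<forall>g\<in>F. continuous_on S g \<and>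
        (\<exists>g'. (\<forall>x\<in>S. (g has_derivative g' x) (at x)) \<and> (\<forall>v. (\<lambda>x. g' x v) \<in> F))))"

definition smooth_atlas :: "('m::topological_space set \<times> ('m \<Rightarrow> 'e::euclidean_space)) set \<Rightarrow> bool" where
  "smooth_atlas A \<longleftrightarrow>
     (\<Union>(fst ` A) = UNIV) \<and>
     (\<forall>(U,\<phi>)\<in>A. open U \<and> open (\<phi> ` U) \<and> (\<exists>\<psi>. homeomorphism U (\<phi> ` U) \<phi> \<psi>)) \<and>
     (\<forall>(U,\<phi>)\<in>A. \<forall>(V,\<kappa>)\<in>A. smooth_on (\<phi> ` (U \<inter> V)) (\<kappa> \<circ> inv_into U \<phi>))"

definition group_action :: "(real^'p \<Rightarrow> 'm \<Rightarrow> 'm) \<Rightarrow> bool" where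
  "group_action act \<longleftrightarrow> (\<forall>x. act 0 x = x) \<and> (\<forall>s t x. act (s + t) x = act s (act t x))"

definition smooth_action :: "('m::topological_space set \<times> ('m \<Rightarrow> 'e::euclidean_space)) set
     \<Rightarrow> (real^'p \<Rightarrow> 'm \<Rightarrow> 'm) \<Rightarrow> bool" where
  "smooth_action A act \<longleftrightarrow> group_action act \<and>
     continuous_on UNIV (\<lambda>(t,x). act t x) \<and>
     (\<forall>(U,\<phi>)\<in>A. \<forall>(V,\<kappa>)\<in>A.
        smooth_on {(t,y). y \<in> \<phi> ` U \<and> act t (inv_into U \<phi> y) \<in> V}
                  (\<lambda>(t,y). \<kappa> (act t (inv_into U \<phi> y))))"

definition coset_of :: "(real^'p) set \<Rightarrow> real^'p \<Rightarrow> (real^'p) set" where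
  "coset_of G x = {y. y - x \<in> G}"

definition quotient_top :: "(real^'p) set \<Rightarrow> (real^'p) set topology" where
  "quotient_top G = topology (\<lambda>\<U>. \<U> \<subseteq> range (coset_of G) \<and> open (\<Union>\<U>))"

definition discrete_subgroup :: "(real^'p) set \<Rightarrow> bool" where
  "discrete_subgroup G \<longleftrightarrow> 0 \<in> G \<and> (\<forall>x\<in>G. \<forall>y\<in>G. x - y \<in> G) \<and>
     (\<forall>x\<in>G. \<exists>e>0. \<forall>y\<in>G. dist y x < e \<longrightarrow> y = x)"

definition full_lattice :: "(real^'p) set \<Rightarrow> bool" where
  "full_lattice G \<longleftrightarrow> discrete_subgroup G \<and> compact_space (quotient_top G)"

definition acts_freely_on :: "(real^'p) set \<Rightarrow> (real^'p \<Rightarrow> 'm \<Rightarrow> 'm) \<Rightarrow> bool" where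
  "acts_freely_on G act \<longleftrightarrow> (\<forall>g\<in>G. \<forall>x. act g x = x \<longrightarrow> g = 0)"

definition acts_properly_on :: "(real^'p) set \<Rightarrow> (real^'p \<Rightarrow> 'm::topological_space \<Rightarrow> 'm) \<Rightarrow> bool" where
  "acts_properly_on G act \<longleftrightarrow>
     proper_map (prod_topology (top_of_set G) (euclidean :: 'm topology))
                (prod_topology (euclidean :: 'm topology) euclidean) (\<lambda>(g,x). (act g x, x))"

end

theory Submission
  imports Defs
begin

lemma quot_istop:
  fixes G :: "(real^'p) set"
  assumes sub: "\<forall>x\<in>G. \<forall>y\<in>G. x - y \<in> G"
  shows "istopology (\<lambda>\<U>. \<U> \<subseteq> range (coset_of G) \<and> open (\<Union>\<U>))"
proof -
  have eq: "\<Union>(U \<inter> V) = \<Union>U \<inter> \<Union>V" if UV: "U \<subseteq> range (coset_of G)" "V \<subseteq> range (coset_of G)" for U V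
  proof
    show "\<Union>U \<inter> \<Union>V \<subseteq> \<Union>(U \<inter> V)"
    proof
      fix z assume "z \<in> \<Union>U \<inter> \<Union>V"
      then obtain c1 c2 where c: "c1 \<in> U" "c2 \<in> V" "z \<in> c1" "z \<in> c2" by blast
      then obtain a b where ab: "c1 = coset_of G a" "c2 = coset_of G b" using UV by blast
      have za: "z - a \<in> G" and zb: "z - b \<in> G" using c ab by (auto simp: coset_of_def)
      have "(z - a) - (z - b) \<in> G" using sub za zb by blast
      then have ba: "b - a \<in> G" by simp
      have "(z - b) - (z - a) \<in> G" using sub za zb by blast
      then have ab': "a - b \<in> G" by simp
      have "c1 = c2"
      proof -
        have "w - a \<in> G \<longleftrightarrow> w - b \<in> G" for w
        proof
          assume "w - a \<in> G" then have "(w - a) - (b - a) \<in> G" using sub ba by blast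
          then show "w - b \<in> G" by simp
        next
          assume "w - b \<in> G" then have "(w - b) - (a - b) \<in> G" using sub ab' by blast
          then show "w - a \<in> G" by simp
        qed
        then show ?thesis using ab by (auto simp: coset_of_def)
      qed
      then show "z \<in> \<Union>(U \<inter> V)" using c by blast
    qed
  qed blast
  have 1: "\<forall>S T. S \<subseteq> range (coset_of G) \<and> open (\<Union>S) \<longrightarrow> T \<subseteq> range (coset_of G) \<and> open (\<Union>T)
      \<longrightarrow> S \<inter> T \<subseteq> range (coset_of G) \<and> open (\<Union>(S \<inter> T))"
    using eq by auto
  have 2: "\<forall>K. (\<forall>k\<in>K. k \<subseteq> range (coset_of G) \<and> open (\<Union>k)) \<longrightarrow> \<Union>K \<subseteq> range (coset_of G) \<and> open (\<Union>(\<Union>K))"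
  proof (intro allI impI conjI)
    fix K :: "(real^'p) set set set" assume h: "\<forall>k\<in>K. k \<subseteq> range (coset_of G) \<and> open (\<Union>k)"
    then show "\<Union>K \<subseteq> range (coset_of G)" by blast
    have "\<Union>(\<Union>K) = \<Union>(Union ` K)" by blast
    moreover have "open (\<Union>(Union ` K))" using h by (intro open_Union) blast
    ultimately show "open (\<Union>(\<Union>K))" by simp
  qed
  show ?thesis unfolding istopology_def using 1 2 by blast
qed

lemma lattice_bound:
  fixes G :: "(real^'p) set"
  assumes z: "0 \<in> G" and sub: "\<forall>x\<in>G. \<forall>y\<in>G. x - y \<in> G"
    and cs: "compact_space (quotient_top G)"
  shows "\<exists>r. \<forall>s. \<exists>g\<in>G. norm (s - g) < r"
proof -
  define X where "X = quotient_top G"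
  have op: "openin X = (\<lambda>\<U>. \<U> \<subseteq> range (coset_of G) \<and> open (\<Union>\<U>))"
    unfolding X_def quotient_top_def using quot_istop[OF sub] by simp
  have ts: "topspace X = range (coset_of G)"
  proof -
    have "\<Union>(range (coset_of G)) = UNIV"
    proof -
      have "x \<in> coset_of G x" for x using z by (simp add: coset_of_def)
      then show ?thesis by blast
    qed
    then have "openin X (range (coset_of G))" using op by simp
    then have "range (coset_of G) \<subseteq> topspace X" by (simp add: openin_subset)
    moreover have "topspace X \<subseteq> range (coset_of G)"
      using op openin_topspace[of X] by metis
    ultimately show ?thesis by blast
  qed
  define W where "W n = coset_of G ` ball 0 (real n)" for n :: nat
  have Wopen: "openin X (W n)" for n
  proof -
    have "\<Union>(W n) = (\<Union>g\<in>G. ball g (real n))"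
    proof (rule set_eqI, rule iffI)
      fix z assume "z \<in> \<Union>(W n)"
      then obtain y where y: "norm y < real n" "z - y \<in> G" by (auto simp: W_def coset_of_def)
      then have "z \<in> ball (z - y) (real n)" by (simp add: dist_norm)
      then show "z \<in> (\<Union>g\<in>G. ball g (real n))" using y by blast
    next
      fix z assume "z \<in> (\<Union>g\<in>G. ball g (real n))"
      then obtain g where g: "g \<in> G" "dist g z < real n" by auto
      have "norm (z - g) < real n" using g by (simp add: dist_norm norm_minus_commute)
      moreover have "z - (z - g) \<in> G" using g by simp
      ultimately show "z \<in> \<Union>(W n)" unfolding W_def coset_of_def by force
    qed
    then have "open (\<Union>(W n))" by (simp add: open_UN)
    then show ?thesis using op by (auto simp: W_def)
  qed
  have cov: "topspace X \<subseteq> \<Union>(range W)"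
  proof
    fix c assume "c \<in> topspace X"
    then obtain s where s: "c = coset_of G s" using ts by blast
    obtain n :: nat where "norm s < real n" using reals_Archimedean2 by blast
    then have "c \<in> W n" using s by (auto simp: W_def)
    then show "c \<in> \<Union>(range W)" by blast
  qed
  have "compactin X (topspace X)" using cs by (simp add: X_def compact_space_def)
  then obtain F where F: "finite F" "F \<subseteq> range W" "topspace X \<subseteq> \<Union>F"
    unfolding compactin_def using Wopen cov by (metis (no_types, lifting) imageE)
  then obtain I where I: "finite I" "F = W ` I" by (meson finite_subset_image subset_UNIV)
  define N where "N = Max (insert 0 I)"
  have mono: "W n \<subseteq> W N" if "n \<in> I" for n
  proof -
    have "n \<le> N" using that I by (simp add: N_def)
    then show ?thesis unfolding W_def by (intro image_mono) auto
  qed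
  have "\<forall>s. \<exists>g\<in>G. norm (s - g) < real N"
  proof
    fix s
    have "coset_of G s \<in> topspace X" using ts by simp
    then have "coset_of G s \<in> W N" using F I mono by blast
    then obtain y where y: "norm y < real N" "coset_of G s = coset_of G y" by (auto simp: W_def)
    have "s \<in> coset_of G s" using z by (simp add: coset_of_def)
    then have "s - y \<in> G" using y by (metis (no_types, lifting) coset_of_def mem_Collect_eq)
    moreover have "norm (s - (s - y)) < real N" using y by simp
    ultimately show "\<exists>g\<in>G. norm (s - g) < real N" by blast
  qed
  then show ?thesis by blast
qed

theorem mainTheorem2:
  fixes A :: "('m::{t2_space, second_countable_topology} set \<times> ('m \<Rightarrow> 'e::euclidean_space)) set"
    and act :: "real^'p \<Rightarrow> 'm \<Rightarrow> 'm"
    and \<Gamma> :: "(real^'p) set"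
  assumes "smooth_atlas A"
    and "smooth_action A act"
    and "full_lattice \<Gamma>"
    and "acts_freely_on \<Gamma> act"
    and "acts_properly_on \<Gamma> act"
  shows "acts_freely_on UNIV act"
proof -
  have ga: "\<And>x. act 0 x = x" "\<And>s t x. act (s + t) x = act s (act t x)"
    and cont: "continuous_on UNIV (\<lambda>(t,x). act t x)"
    using assms(2) by (auto simp: smooth_action_def group_action_def)
  have z: "0 \<in> \<Gamma>" and sub: "\<forall>x\<in>\<Gamma>. \<forall>y\<in>\<Gamma>. x - y \<in> \<Gamma>"
    and cs: "compact_space (quotient_top \<Gamma>)"
    using assms(3) by (auto simp: full_lattice_def discrete_subgroup_def)
  obtain r where r: "\<forall>s. \<exists>g\<in>\<Gamma>. norm (s - g) < r" using lattice_bound[OF z sub cs] by blast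
  have pm: "proper_map (prod_topology (top_of_set \<Gamma>) (euclidean :: 'm topology))
                (prod_topology (euclidean :: 'm topology) euclidean) (\<lambda>(g,x). (act g x, x))"
    using assms(5) by (simp add: acts_properly_on_def)
  show ?thesis unfolding acts_freely_on_def
  proof (intro ballI allI impI)
    fix t :: "real^'p" and x :: 'm
    assume fix_t: "act t x = x"
    have cx: "continuous_on UNIV (\<lambda>s. act s x)"
    proof -
      have "continuous_on UNIV (\<lambda>s::real^'p. (s, x))" by (intro continuous_intros)
      then have "continuous_on UNIV ((\<lambda>(t,x). act t x) \<circ> (\<lambda>s. (s, x)))"
        by (rule continuous_on_compose) (rule continuous_on_subset[OF cont], simp)
      then show ?thesis by (simp add: o_def)
    qed
    define Kc where "Kc = (\<lambda>s. act s x) ` cball 0 r"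
    have "compact Kc" unfolding Kc_def
      by (rule compact_continuous_image) (auto intro: continuous_on_subset[OF cx])
    then have K: "compactin (prod_topology (euclidean :: 'm topology) euclidean) ({x} \<times> Kc)"
      by (simp add: compact_Times)
    define P where "P = {p \<in> topspace (prod_topology (top_of_set \<Gamma>) (euclidean :: 'm topology)).
                         (\<lambda>(g,x). (act g x, x)) p \<in> {x} \<times> Kc}"
    have "compactin (prod_topology (top_of_set \<Gamma>) euclidean) P"
      unfolding P_def by (rule compactin_proper_map_preimage[OF pm K])
    then have "compactin (top_of_set \<Gamma>) (fst ` P)"
      by (rule image_compactin) (rule continuous_map_fst)
    then have "compact (fst ` P)" by (simp add: compactin_subtopology)
    then obtain B where B: "\<forall>g\<in>fst ` P. norm g \<le> B"
      using compact_imp_bounded bounded_iff by metis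
    have bnd: "norm s \<le> B + r" if hs: "act s x = x" for s
    proof -
      obtain g where g: "g \<in> \<Gamma>" "norm (s - g) < r" using r by blast
      define k where "k = s - g"
      have "act g (act k x) = act s x" using ga(2)[of g k x] by (simp add: k_def)
      then have "act g (act k x) = x" using hs by simp
      moreover have "act k x \<in> Kc" using g by (auto simp: Kc_def k_def)
      ultimately have "(g, act k x) \<in> P" using g by (simp add: P_def)
      then have "norm g \<le> B" using B by force
      moreover have "norm s \<le> norm g + norm k" unfolding k_def
        using norm_triangle_ineq[of g "s - g"] by simp
      ultimately show ?thesis using g by (simp add: k_def)
    qed
    have mult: "act (real n *\<^sub>R t) x = x" for n :: nat
    proof (induction n)
      case 0 then show ?case using ga(1) by simp
    next
      case (Suc n)
      have "real (Suc n) *\<^sub>R t = t + real n *\<^sub>R t" by (simp add: algebra_simps)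
      then show ?case using ga(2)[of t "real n *\<^sub>R t" x] Suc fix_t by simp
    qed
    show "t = 0"
    proof (rule ccontr)
      assume "t \<noteq> 0"
      then have tp: "norm t > 0" by simp
      obtain n :: nat where n: "(B + r) / norm t < real n" using reals_Archimedean2 by blast
      then have "B + r < real n * norm t" using tp by (simp add: field_simps)
      moreover have "norm (real n *\<^sub>R t) \<le> B + r" using bnd[OF mult[of n]] .
      ultimately show False by simp
    qed
  qed
qed

end
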